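(* Let $v\ge2$ and $M,N\in{\cal I}_v$ with $N=N_1+N_2$, where $N_1=\beta M$ for some $\beta\in\mathbb R$ and $M\perp N_2$ with respect to $(x,y):=\mathrm{Re}(xy^* )$. Then $$\{e^M,e^N\}=2(\cos|M|)\,e^N+2\,\frac{\sin|M|}{|M|}\,M\Big(\cos|N|+\frac{\sin|N|}{|N|}N_1\Big).$$
   Context: ${\cal A}_v$ is the real Cayley-Dickson algebra of dimension $2^v$, $z^*$ its conjugation, $\mathrm{Re}(z)=(z+z^* )/2$, $|z|=(zz^* )^{1/2}$, ${\cal I}_v=\{z:\mathrm{Re}(z)=0\}$. For $M\in{\cal I}_v$, $e^M=\cos|M|+\frac{\sin|M|}{|M|}M$ (with $\frac{\sin|M|}{|M|}:=1$ when $M=0$). $\{a,b\}:=ab+ba$ is the anticommutator. *)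

theory Defs
  imports Complex_Main
begin

text \<open>Real Cayley-Dickson algebra A_v of dimension 2^v. The doubling is
  A_(v+1) = A_v x A_v with (a,b)(c,d) = (ac - d* b, da + b c*), (a,b)* = (a*, -b).
  Index i < 2^v is the first component, 2^v <= i < 2^(v+1) the second.\<close>

type_synonym cd = "nat \<Rightarrow> real"

definition cd_carrier :: "nat \<Rightarrow> cd set" where
  "cd_carrier v = {x. \<forall>i\<ge>2^v. x i = 0}"

definition cd_lo :: "nat \<Rightarrow> cd \<Rightarrow> cd" where
  "cd_lo h x = (\<lambda>i. if i < h then x i else 0)"

definition cd_hi :: "nat \<Rightarrow> cd \<Rightarrow> cd" where
  "cd_hi h x = (\<lambda>i. if i < h then x (i + h) else 0)"

definition cd_pair :: "nat \<Rightarrow> cd \<Rightarrow> cd \<Rightarrow> cd" where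
  "cd_pair h p q = (\<lambda>i. if i < h then p i else if i < 2 * h then q (i - h) else 0)"

definition cd_real :: "real \<Rightarrow> cd" where
  "cd_real r = (\<lambda>i. if i = 0 then r else 0)"

definition cd_add :: "cd \<Rightarrow> cd \<Rightarrow> cd" where
  "cd_add x y = (\<lambda>i. x i + y i)"

definition cd_sub :: "cd \<Rightarrow> cd \<Rightarrow> cd" where
  "cd_sub x y = (\<lambda>i. x i - y i)"

definition cd_neg :: "cd \<Rightarrow> cd" where
  "cd_neg x = (\<lambda>i. - x i)"

definition cd_zero :: cd where
  "cd_zero = (\<lambda>i. 0)"

definition cd_scale :: "real \<Rightarrow> cd \<Rightarrow> cd" where
  "cd_scale c x = (\<lambda>i. c * x i)"

primrec cd_conj :: "nat \<Rightarrow> cd \<Rightarrow> cd" where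
  "cd_conj 0 x = cd_real (x 0)"
| "cd_conj (Suc v) x =
     cd_pair (2^v) (cd_conj v (cd_lo (2^v) x)) (cd_neg (cd_hi (2^v) x))"

primrec cd_mult :: "nat \<Rightarrow> cd \<Rightarrow> cd \<Rightarrow> cd" where
  "cd_mult 0 x y = cd_real (x 0 * y 0)"
| "cd_mult (Suc v) x y =
     (let h = 2^v; a = cd_lo h x; b = cd_hi h x; c = cd_lo h y; d = cd_hi h y
      in cd_pair h (cd_sub (cd_mult v a c) (cd_mult v (cd_conj v d) b))
                   (cd_add (cd_mult v d a) (cd_mult v b (cd_conj v c))))"

definition cd_Re :: "nat \<Rightarrow> cd \<Rightarrow> cd" where
  "cd_Re v z = cd_scale (1/2) (cd_add z (cd_conj v z))"

text \<open>|z| = (z z*)^(1/2); z z* is real, i.e. its 0-th coordinate.\<close>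
definition cd_norm :: "nat \<Rightarrow> cd \<Rightarrow> real" where
  "cd_norm v z = sqrt (cd_mult v z (cd_conj v z) 0)"

definition cd_Im :: "nat \<Rightarrow> cd set" where
  "cd_Im v = {z \<in> cd_carrier v. cd_Re v z = cd_zero}"

definition cd_inner :: "nat \<Rightarrow> cd \<Rightarrow> cd \<Rightarrow> cd" where
  "cd_inner v x y = cd_Re v (cd_mult v x (cd_conj v y))"

definition sinc_div :: "real \<Rightarrow> real" where
  "sinc_div t = (if t = 0 then 1 else sin t / t)"

definition cd_exp :: "nat \<Rightarrow> cd \<Rightarrow> cd" where
  "cd_exp v M = cd_add (cd_real (cos (cd_norm v M))) (cd_scale (sinc_div (cd_norm v M)) M)"

definition cd_anticomm :: "nat \<Rightarrow> cd \<Rightarrow> cd \<Rightarrow> cd" where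
  "cd_anticomm v a b = cd_add (cd_mult v a b) (cd_mult v b a)"

end

theory Submission
  imports Defs
begin

lemma cd_sub_alt: "cd_sub x y = cd_add x (cd_scale (-1) y)"
  by (simp add: cd_sub_def cd_add_def cd_scale_def fun_eq_iff)
lemma cd_neg_alt: "cd_neg x = cd_scale (-1) x"
  by (simp add: cd_neg_def cd_scale_def fun_eq_iff)

lemma lo_add: "cd_lo h (cd_add x y) = cd_add (cd_lo h x) (cd_lo h y)"
  by (simp add: cd_lo_def cd_add_def fun_eq_iff)
lemma hi_add: "cd_hi h (cd_add x y) = cd_add (cd_hi h x) (cd_hi h y)"
  by (simp add: cd_hi_def cd_add_def fun_eq_iff)
lemma lo_scale: "cd_lo h (cd_scale c x) = cd_scale c (cd_lo h x)"
  by (simp add: cd_lo_def cd_scale_def fun_eq_iff)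
lemma hi_scale: "cd_hi h (cd_scale c x) = cd_scale c (cd_hi h x)"
  by (simp add: cd_hi_def cd_scale_def fun_eq_iff)

lemmas lin_simps = cd_sub_alt cd_neg_alt lo_add hi_add lo_scale hi_scale

lemma conj_add: "cd_conj v (cd_add x y) = cd_add (cd_conj v x) (cd_conj v y)"
  by (induction v arbitrary: x y)
     (simp_all add: lin_simps, auto simp: fun_eq_iff cd_pair_def cd_add_def cd_scale_def cd_real_def)

lemma conj_scale: "cd_conj v (cd_scale c x) = cd_scale c (cd_conj v x)"
  by (induction v arbitrary: x)
     (simp_all add: lin_simps, auto simp: fun_eq_iff cd_pair_def cd_add_def cd_scale_def cd_real_def)

lemma mult_add_both: "cd_mult v (cd_add x y) z = cd_add (cd_mult v x z) (cd_mult v y z) \<and>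
   cd_mult v z (cd_add x y) = cd_add (cd_mult v z x) (cd_mult v z y)"
  by (induction v arbitrary: x y z)
     (simp_all add: lin_simps conj_add conj_scale Let_def, auto simp: fun_eq_iff cd_pair_def cd_add_def cd_scale_def cd_real_def algebra_simps)

lemma mult_scale_both: "cd_mult v (cd_scale c x) z = cd_scale c (cd_mult v x z) \<and>
   cd_mult v z (cd_scale c x) = cd_scale c (cd_mult v z x)"
  by (induction v arbitrary: x z)
     (simp_all add: lin_simps conj_add conj_scale Let_def, auto simp: fun_eq_iff cd_pair_def cd_add_def cd_scale_def cd_real_def algebra_simps)

lemmas mult_add_l = mult_add_both[THEN conjunct1]
lemmas mult_add_r = mult_add_both[THEN conjunct2]
lemmas mult_scale_l = mult_scale_both[THEN conjunct1]
lemmas mult_scale_r = mult_scale_both[THEN conjunct2]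


lemma carrier_add[simp]: "x \<in> cd_carrier v \<Longrightarrow> y \<in> cd_carrier v \<Longrightarrow> cd_add x y \<in> cd_carrier v"
  by (simp add: cd_carrier_def cd_add_def)
lemma carrier_scale[simp]: "x \<in> cd_carrier v \<Longrightarrow> cd_scale c x \<in> cd_carrier v"
  by (simp add: cd_carrier_def cd_scale_def)
lemma carrier_neg[simp]: "x \<in> cd_carrier v \<Longrightarrow> cd_neg x \<in> cd_carrier v"
  by (simp add: cd_carrier_def cd_neg_def)
lemma carrier_sub[simp]: "x \<in> cd_carrier v \<Longrightarrow> y \<in> cd_carrier v \<Longrightarrow> cd_sub x y \<in> cd_carrier v"
  by (simp add: cd_carrier_def cd_sub_def)
lemma carrier_real[simp]: "cd_real r \<in> cd_carrier v"
  by (simp add: cd_carrier_def cd_real_def)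
lemma carrier_zero[simp]: "cd_zero \<in> cd_carrier v"
  by (simp add: cd_carrier_def cd_zero_def)
lemma carrier_lo[simp]: "cd_lo (2^v) x \<in> cd_carrier v"
  by (simp add: cd_carrier_def cd_lo_def)
lemma carrier_hi[simp]: "cd_hi (2^v) x \<in> cd_carrier v"
  by (simp add: cd_carrier_def cd_hi_def)
lemma carrier_pair[simp]: "cd_pair (2^v) p q \<in> cd_carrier (Suc v)"
  by (simp add: cd_carrier_def cd_pair_def)
lemma carrier_conj[simp]: "cd_conj v x \<in> cd_carrier v"
  by (cases v) (simp_all add: cd_carrier_def cd_real_def cd_pair_def)
lemma carrier_mult[simp]: "cd_mult v x y \<in> cd_carrier v"
  by (cases v) (simp_all add: cd_carrier_def cd_real_def cd_pair_def Let_def)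

lemma lo_pair[simp]: "p \<in> cd_carrier v \<Longrightarrow> cd_lo (2^v) (cd_pair (2^v) p q) = p"
  by (auto simp: cd_carrier_def cd_lo_def cd_pair_def fun_eq_iff)
lemma hi_pair[simp]: "q \<in> cd_carrier v \<Longrightarrow> cd_hi (2^v) (cd_pair (2^v) p q) = q"
  by (auto simp: cd_carrier_def cd_hi_def cd_pair_def fun_eq_iff)
lemma pair_lo_hi: "x \<in> cd_carrier (Suc v) \<Longrightarrow> cd_pair (2^v) (cd_lo (2^v) x) (cd_hi (2^v) x) = x"
  by (auto simp: cd_carrier_def cd_hi_def cd_lo_def cd_pair_def fun_eq_iff)

lemma conj_conj: "x \<in> cd_carrier v \<Longrightarrow> cd_conj v (cd_conj v x) = x"
proof (induction v arbitrary: x)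
  case 0
  then show ?case by (auto simp: cd_carrier_def cd_real_def fun_eq_iff)
next
  case (Suc v)
  have "cd_neg (cd_neg (cd_hi (2^v) x)) = cd_hi (2^v) x"
    by (simp add: cd_neg_def)
  then show ?case using Suc by (simp add: pair_lo_hi)
qed

lemma scale_zero: "cd_scale 0 x = cd_zero"
  by (simp add: cd_scale_def cd_zero_def)
lemma mult_zero: "cd_mult v cd_zero y = cd_zero" "cd_mult v y cd_zero = cd_zero"
  using mult_scale_l[of v 0 cd_zero y] mult_scale_r[of v y 0 cd_zero] by (simp_all add: scale_zero)
lemma conj_zero: "cd_conj v cd_zero = cd_zero"
  using conj_scale[of v 0 cd_zero] by (simp add: scale_zero)

lemma lo_real: "cd_lo (2^v) (cd_real r) = cd_real r"
  by (auto simp: cd_lo_def cd_real_def fun_eq_iff)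
lemma hi_real: "cd_hi (2^v) (cd_real r) = cd_zero"
  by (auto simp: cd_hi_def cd_real_def cd_zero_def fun_eq_iff)

lemma conj_real: "cd_conj v (cd_real r) = cd_real r"
proof (induction v)
  case 0 then show ?case by (simp add: cd_real_def mult.commute)
next
  case (Suc v)
  then show ?case
    by (simp add: lo_real hi_real cd_neg_alt scale_zero[symmetric]) (auto simp: cd_pair_def cd_real_def cd_scale_def cd_zero_def fun_eq_iff)
qed


lemma mult_real: "x \<in> cd_carrier v \<Longrightarrow> cd_mult v (cd_real r) x = cd_scale r x \<and> cd_mult v x (cd_real r) = cd_scale r x"
proof (induction v arbitrary: x)
  case 0
  then show ?case by (auto simp: cd_carrier_def cd_real_def cd_scale_def fun_eq_iff)
next
  case (Suc v)
  have lo: "cd_lo (2^v) x \<in> cd_carrier v" and hi: "cd_hi (2^v) x \<in> cd_carrier v" by simp_all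
  have e: "cd_pair (2^v) (cd_scale r (cd_lo (2^v) x)) (cd_scale r (cd_hi (2^v) x)) = cd_scale r x"
    using Suc.prems by (auto simp: cd_carrier_def cd_pair_def cd_lo_def cd_hi_def cd_scale_def fun_eq_iff)
  show ?case
    using Suc.IH[OF lo] Suc.IH[OF hi] e
    by (simp add: Let_def lo_real hi_real mult_zero conj_zero conj_real)
       (auto simp: cd_sub_def cd_add_def cd_zero_def)
qed

lemma conj_mult: "cd_conj v (cd_mult v x y) = cd_mult v (cd_conj v y) (cd_conj v x)"
proof (induction v arbitrary: x y)
  case 0
  then show ?case by (simp add: cd_real_def mult.commute)
next
  case (Suc v)
  show ?case
    by (simp add: Let_def Suc.IH conj_conj lin_simps conj_add conj_scale mult_add_l mult_add_r mult_scale_l mult_scale_r)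
       (auto simp: fun_eq_iff cd_pair_def cd_add_def cd_scale_def)
qed


lemma Im_conj: "M \<in> cd_Im v \<Longrightarrow> cd_conj v M = cd_scale (-1) M"
  unfolding cd_Im_def cd_Re_def
  by (auto simp: fun_eq_iff cd_scale_def cd_add_def cd_zero_def) (metis add_eq_0_iff)

theorem lemma12:
  fixes v :: nat and M N N1 N2 :: cd and \<beta> :: real
  assumes "v \<ge> 2"
    and "M \<in> cd_Im v" and "N \<in> cd_Im v"
    and "N = cd_add N1 N2"
    and "N1 = cd_scale \<beta> M"
    and "cd_inner v M N2 = cd_zero"
  shows "cd_anticomm v (cd_exp v M) (cd_exp v N) =
           cd_add (cd_scale (2 * cos (cd_norm v M)) (cd_exp v N))
                  (cd_scale (2 * sinc_div (cd_norm v M))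
                     (cd_mult v M (cd_add (cd_real (cos (cd_norm v N)))
                                          (cd_scale (sinc_div (cd_norm v N)) N1))))"
proof -
  have Mc: "M \<in> cd_carrier v" and Nc: "N \<in> cd_carrier v" using assms(2,3) by (auto simp: cd_Im_def)
  have cM: "cd_conj v M = cd_scale (-1) M" using Im_conj[OF assms(2)] .
  have cN: "cd_conj v N = cd_scale (-1) N" using Im_conj[OF assms(3)] .
  have N2e: "N2 = cd_add N (cd_scale (-\<beta>) M)"
    using assms(4,5) by (auto simp: fun_eq_iff cd_add_def cd_scale_def)
  have N2c: "N2 \<in> cd_carrier v" using N2e Mc Nc by simp
  have cN2: "cd_conj v N2 = cd_scale (-1) N2"
    unfolding N2e conj_add conj_scale cM cN by (auto simp: fun_eq_iff cd_add_def cd_scale_def)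
  have "cd_add (cd_mult v M (cd_conj v N2)) (cd_conj v (cd_mult v M (cd_conj v N2))) = cd_zero"
    using assms(6) unfolding cd_inner_def cd_Re_def
    by (auto simp: fun_eq_iff cd_scale_def cd_add_def cd_zero_def)
  then have "cd_add (cd_mult v M (cd_conj v N2)) (cd_mult v N2 (cd_conj v M)) = cd_zero"
    by (simp only: conj_mult conj_conj[OF N2c])
  then have "cd_add (cd_mult v M (cd_scale (-1) N2)) (cd_mult v N2 (cd_scale (-1) M)) = cd_zero"
    by (simp only: cN2 cM)
  then have "cd_add (cd_scale (-1) (cd_mult v M N2)) (cd_scale (-1) (cd_mult v N2 M)) = cd_zero"
    by (simp only: mult_scale_l mult_scale_r)
  then have key0: "\<And>i. cd_mult v M N2 i + cd_mult v N2 M i = 0"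
  proof -
    fix i
    assume h: "cd_add (cd_scale (-1) (cd_mult v M N2)) (cd_scale (-1) (cd_mult v N2 M)) = cd_zero"
    have "(-1) * cd_mult v M N2 i + (-1) * cd_mult v N2 M i = 0"
      using fun_cong[OF h, of i] unfolding cd_add_def cd_scale_def cd_zero_def .
    then show "cd_mult v M N2 i + cd_mult v N2 M i = 0" by linarith
  qed
  have key: "\<And>i. cd_mult v M N i + cd_mult v N M i = 2 * \<beta> * cd_mult v M M i"
  proof -
    fix i
    have "N = cd_add (cd_scale \<beta> M) N2" using assms(4,5) by simp
    then have e1: "cd_mult v M N = cd_add (cd_scale \<beta> (cd_mult v M M)) (cd_mult v M N2)"
      and e2: "cd_mult v N M = cd_add (cd_scale \<beta> (cd_mult v M M)) (cd_mult v N2 M)"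
      by (simp_all only: mult_add_l mult_add_r mult_scale_l mult_scale_r)
    have "cd_mult v M N i + cd_mult v N M i = 2 * \<beta> * cd_mult v M M i + (cd_mult v M N2 i + cd_mult v N2 M i)"
      unfolding e1 e2 by (simp add: cd_add_def cd_scale_def)
    then show "cd_mult v M N i + cd_mult v N M i = 2 * \<beta> * cd_mult v M M i" using key0[of i] by simp
  qed
  show ?thesis
    unfolding cd_anticomm_def cd_exp_def assms(5)
    apply (simp add: mult_add_l mult_add_r mult_scale_l mult_scale_r mult_real Mc Nc)
    apply (simp add: fun_eq_iff cd_add_def cd_scale_def)
    apply (intro allI)
    subgoal for i
    proof -
      have k: "cd_mult v M N i = 2 * \<beta> * cd_mult v M M i - cd_mult v N M i" using key[of i] by linarith
      show ?thesis by (simp add: k cd_real_def algebra_simps)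
    qed
    done
qed

end
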